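(* Let $\zeta_5$ be a primitive $5$-th root of unity. (1) $\{\operatorname{Tr}(M) : M\in G_q(\zeta_5)\}=\left\{0,\ \tfrac{\sqrt5-1}{2}c,\ c,\ \tfrac{\sqrt5+1}{2}c,\ 2c : c=\pm\zeta_5^j,\ j=0,1,2,3,4\right\}$. (2) For $M_q\in G_q$, let $f(q)=\operatorname{Tr} M_q\in\mathbb{Z}[q,q^{-1}]$. Then the following are equivalent: $f(1)$ is a multiple of $5$; $f(\zeta_5)=0$; $f(q)$ is divisible by $[5]_q=q^4+q^3+q^2+q+1$.
   Context: Let $q$ be a formal parameter and let $R_q=\begin{pmatrix} q & 1\\ 0 & 1\end{pmatrix}$, $S_q=\begin{pmatrix} 0 & -q^{-1}\\ 1 & 0\end{pmatrix}\in \mathrm{GL}(2,\mathbb{Z}[q,q^{-1}])$. Let $G_q=\langle R_q,S_q\rangle$ be the group they generate. For $\zeta\in\mathbb{C}^*$, set $G_q(\zeta)=\{M_q|_{q=\zeta} : M_q\in G_q\}\subset \mathrm{GL}(2,\mathbb{C})$. *)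

theory Defs
  imports "HOL-Analysis.Analysis" "HOL-Computational_Algebra.Formal_Laurent_Series"
begin

text \<open>Laurent polynomials Z[q,q^-1] are the integer formal Laurent series with finite support;
  the formal parameter q is fls_X.\<close>

definition laurent_poly :: "int fls \<Rightarrow> bool" where
  "laurent_poly f \<longleftrightarrow> finite {k. fls_nth f k \<noteq> 0}"

definition laurent_eval :: "complex \<Rightarrow> int fls \<Rightarrow> complex" where
  "laurent_eval z f = (\<Sum>k\<in>{k. fls_nth f k \<noteq> 0}. of_int (fls_nth f k) * z powi k)"

definition Rq :: "int fls^2^2" where
  "Rq = vector [vector [fls_X, 1], vector [0, 1]]"

definition Sq :: "int fls^2^2" where
  "Sq = vector [vector [0, - fls_X_inv], vector [1, 0]]"

definition Rq_inv :: "int fls^2^2" where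
  "Rq_inv = vector [vector [fls_X_inv, - fls_X_inv], vector [0, 1]]"

definition Sq_inv :: "int fls^2^2" where
  "Sq_inv = vector [vector [0, 1], vector [- fls_X, 0]]"

inductive_set Gq :: "(int fls^2^2) set" where
  one: "mat 1 \<in> Gq"
| mulR: "M \<in> Gq \<Longrightarrow> M ** Rq \<in> Gq"
| mulS: "M \<in> Gq \<Longrightarrow> M ** Sq \<in> Gq"
| mulRi: "M \<in> Gq \<Longrightarrow> M ** Rq_inv \<in> Gq"
| mulSi: "M \<in> Gq \<Longrightarrow> M ** Sq_inv \<in> Gq"

definition eval_mat :: "complex \<Rightarrow> int fls^2^2 \<Rightarrow> complex^2^2" where
  "eval_mat z M = (\<chi> i j. laurent_eval z (M $ i $ j))"

definition Gq_at :: "complex \<Rightarrow> (complex^2^2) set" where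
  "Gq_at z = eval_mat z ` Gq"

definition qint5 :: "int fls" where
  "qint5 = fls_X^4 + fls_X^3 + fls_X^2 + fls_X + 1"

definition laurent_dvd :: "int fls \<Rightarrow> int fls \<Rightarrow> bool" where
  "laurent_dvd d f \<longleftrightarrow> (\<exists>g. laurent_poly g \<and> f = d * g)"

end

theory Submission
  imports Defs
begin

lemma lp_eval_superset:
  assumes "finite A" "{k. fls_nth f k \<noteq> 0} \<subseteq> A"
  shows "laurent_eval z f = (\<Sum>k\<in>A. of_int (fls_nth f k) * z powi k)"
  unfolding laurent_eval_def by (rule sum.mono_neutral_left) (use assms in auto)

lemma lp_add:
  assumes "laurent_poly f" "laurent_poly g"
  shows "laurent_poly (f + g)" "laurent_eval z (f + g) = laurent_eval z f + laurent_eval z g"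
proof -
  let ?A = "{k. fls_nth f k \<noteq> 0} \<union> {k. fls_nth g k \<noteq> 0}"
  have fA: "finite ?A" using assms unfolding laurent_poly_def by auto
  have s: "{k. fls_nth (f+g) k \<noteq> 0} \<subseteq> ?A" by auto
  then show "laurent_poly (f + g)" unfolding laurent_poly_def using fA finite_subset by blast
  show "laurent_eval z (f + g) = laurent_eval z f + laurent_eval z g"
    using lp_eval_superset[OF fA s, of z] lp_eval_superset[OF fA, of f z] lp_eval_superset[OF fA, of g z]
    by (auto simp: sum.distrib distrib_right)
qed

lemma lp_uminus:
  assumes "laurent_poly f"
  shows "laurent_poly (- f)" "laurent_eval z (- f) = - laurent_eval z f"
  using assms by (auto simp: laurent_poly_def laurent_eval_def sum_negf)

lemma lp_shift:
  assumes "laurent_poly f" "z \<noteq> 0"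
  shows "laurent_poly (fls_shift m f)" "laurent_eval z (fls_shift m f) = z powi (-m) * laurent_eval z f"
proof -
  have e: "{k. fls_nth (fls_shift m f) k \<noteq> 0} = (\<lambda>k. k - m) ` {k. fls_nth f k \<noteq> 0}"
    by (auto simp: image_iff) (metis add_diff_cancel_right')
  then show "laurent_poly (fls_shift m f)" using assms unfolding laurent_poly_def by simp
  have "laurent_eval z (fls_shift m f) = (\<Sum>k\<in>{k. fls_nth f k \<noteq> 0}. of_int (fls_nth f k) * z powi (k - m))"
    unfolding laurent_eval_def e by (subst sum.reindex) (auto simp: inj_on_def)
  also have "\<dots> = z powi (-m) * laurent_eval z f"
    unfolding laurent_eval_def sum_distrib_left
    using assms(2) by (intro sum.cong) (auto simp: power_int_diff power_int_minus field_simps)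
  finally show "laurent_eval z (fls_shift m f) = z powi (-m) * laurent_eval z f" .
qed

lemma lp_const:
  "laurent_poly (fls_const c)" "laurent_eval z (fls_const c) = of_int c"
proof -
  have e: "{k. fls_nth (fls_const c) k \<noteq> 0} \<subseteq> {0}" by auto
  then show "laurent_poly (fls_const c)" unfolding laurent_poly_def using finite_subset by blast
  show "laurent_eval z (fls_const c) = of_int c"
    using lp_eval_superset[OF _ e] by simp
qed

lemma lp_0: "laurent_poly 0" "laurent_eval z 0 = 0"
  using lp_const[where c=0] by simp_all

lemma lp_1: "laurent_poly 1" "laurent_eval z 1 = 1"
  using lp_const[where c=1] by simp_all

lemma lp_X: "z \<noteq> 0 \<Longrightarrow> laurent_poly fls_X" "z \<noteq> 0 \<Longrightarrow> laurent_eval z fls_X = z"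
  using lp_shift[OF lp_1(1), of z "-1"] by (simp_all add: fls_X_conv_shift_1 lp_1)

lemma lp_Xinv: "z \<noteq> 0 \<Longrightarrow> laurent_poly fls_X_inv" "z \<noteq> 0 \<Longrightarrow> laurent_eval z fls_X_inv = inverse z"
  using lp_shift[OF lp_1(1), of z "1"] by (simp_all add: fls_X_inv_conv_shift_1 lp_1 power_int_minus)

type_synonym zt = "int \<times> int \<times> int \<times> int"
type_synonym zm = "zt \<times> zt \<times> zt \<times> zt"
fun tadd :: "zt \<Rightarrow> zt \<Rightarrow> zt" where
  "tadd (a0,a1,a2,a3) (b0,b1,b2,b3) = (a0+b0,a1+b1,a2+b2,a3+b3)"
fun tmul :: "zt \<Rightarrow> zt \<Rightarrow> zt" where
  "tmul (a0,a1,a2,a3) (b0,b1,b2,b3) =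
    (a0*b0 - (a1*b3+a2*b2+a3*b1) + (a2*b3+a3*b2),
     a0*b1+a1*b0 - (a1*b3+a2*b2+a3*b1) + a3*b3,
     a0*b2+a1*b1+a2*b0 - (a1*b3+a2*b2+a3*b1),
     a0*b3+a1*b2+a2*b1+a3*b0 - (a1*b3+a2*b2+a3*b1))"
fun tmm :: "zm \<Rightarrow> zm \<Rightarrow> zm" where
  "tmm (a,b,c,d) (e,f,g,h) = (tadd (tmul a e) (tmul b g), tadd (tmul a f) (tmul b h),
      tadd (tmul c e) (tmul d g), tadd (tmul c f) (tmul d h))"
fun tscale :: "zt \<Rightarrow> zm \<Rightarrow> zm" where
  "tscale x (a,b,c,d) = (tmul x a, tmul x b, tmul x c, tmul x d)"
fun ttr :: "zm \<Rightarrow> zt" where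
  "ttr (a,b,c,d) = tadd a d"

fun emb :: "complex \<Rightarrow> zt \<Rightarrow> complex" where
  "emb z (a0,a1,a2,a3) = of_int a0 + of_int a1 * z + of_int a2 * z^2 + of_int a3 * z^3"

fun embm :: "complex \<Rightarrow> zm \<Rightarrow> complex^2^2" where
  "embm z (a,b,c,d) = vector [vector [emb z a, emb z b], vector [emb z c, emb z d]]"

definition cs :: "complex \<Rightarrow> complex^2^2 \<Rightarrow> complex^2^2" where
  "cs c A = (\<chi> i j. c * A $ i $ j)"

lemma cs_mult: "cs c A ** B = cs c (A ** B)"
  by (simp add: cs_def vec_eq_iff matrix_matrix_mult_def sum_distrib_left mult.assoc)

lemma cs_cs: "cs c (cs d A) = cs (c * d) A"
  by (simp add: cs_def vec_eq_iff mult.assoc)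

lemma cs_trace: "trace (cs c A) = c * trace A"
  by (simp add: cs_def trace_def sum_distrib_left)

definition phi5 :: "complex \<Rightarrow> bool" where
  "phi5 z \<longleftrightarrow> z^4 + z^3 + z^2 + z + 1 = 0"

lemma emb_add: "emb z (tadd a b) = emb z a + emb z b"
  by (cases a; cases b) (simp add: algebra_simps)

lemma phi5_pow5: "phi5 z \<Longrightarrow> z^5 = 1"
proof -
  assume "phi5 z"
  then have "(z - 1) * (z^4 + z^3 + z^2 + z + 1) = 0" by (simp add: phi5_def)
  then show ?thesis by (simp add: algebra_simps power_Suc eval_nat_numeral)
qed

lemma emb_mul:
  assumes "phi5 z"
  shows "emb z (tmul a b) = emb z a * emb z b"
proof -
  obtain a0 a1 a2 a3 where a: "a = (a0,a1,a2,a3)" by (cases a) auto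
  obtain b0 b1 b2 b3 where b: "b = (b0,b1,b2,b3)" by (cases b) auto
  have z4: "z^4 = -(z^3 + z^2 + z + 1)"
  proof -
    have h: "z^4 + (z^3 + z^2 + z + 1) = 0" using assms by (simp add: phi5_def add.assoc)
    then show ?thesis using eq_neg_iff_add_eq_0 by blast
  qed
  have z5: "z^5 = 1" using phi5_pow5[OF assms] .
  have z6: "z^6 = z" using z5 by (simp add: power_Suc eval_nat_numeral)
  define p4 :: complex where "p4 = of_int (a1*b3+a2*b2+a3*b1)"
  define p5 :: complex where "p5 = of_int (a2*b3+a3*b2)"
  define p6 :: complex where "p6 = of_int (a3*b3)"
  have "emb z a * emb z b = of_int (a0*b0) + of_int (a0*b1+a1*b0) * z + of_int (a0*b2+a1*b1+a2*b0) * z^2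
     + of_int (a0*b3+a1*b2+a2*b1+a3*b0) * z^3 + p4 * z^4 + p5 * z^5 + p6 * z^6"
    unfolding a b p4_def p5_def p6_def by (simp add: algebra_simps eval_nat_numeral)
  also have "\<dots> = emb z (tmul a b)"
    unfolding a b p4_def p5_def p6_def z4 z5 z6 by (simp add: algebra_simps)
  finally show ?thesis by simp
qed

lemma embm_mm:
  assumes "phi5 z"
  shows "embm z (tmm A B) = embm z A ** embm z B"
  by (cases A; cases B)
     (auto simp del: tmul.simps tadd.simps emb.simps simp add: vec_eq_iff forall_2 sum_2 matrix_matrix_mult_def emb_mul[OF assms] emb_add)

lemma embm_scale:
  assumes "phi5 z"
  shows "embm z (tscale c A) = cs (emb z c) (embm z A)"
  by (cases A) (auto simp del: tmul.simps tadd.simps emb.simps simp add: cs_def vec_eq_iff forall_2 emb_mul[OF assms])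

lemma embm_trace: "trace (embm z A) = emb z (ttr A)"
  by (cases A) (auto simp del: tmul.simps tadd.simps emb.simps simp add: trace_def sum_2 emb_add)

lemma sq5: fixes x :: int assumes "x^2 mod 5 = 0" shows "x mod 5 = 0"
proof -
  have e: "x^2 mod 5 = (x mod 5)^2 mod 5" by (simp add: power_mod)
  have "x mod 5 \<in> {0,1,2,3,4}" by auto
  then show ?thesis using assms e by (auto simp: power2_eq_square)
qed

lemma dbl5: fixes x :: int assumes "(2*x) mod 5 = 0" shows "x mod 5 = 0"
proof -
  have e: "(2*x) mod 5 = (2*(x mod 5)) mod 5" by (simp add: mod_mult_right_eq)
  have "x mod 5 \<in> {0,1,2,3,4}" by auto
  then show ?thesis using assms e by auto
qed

lemma desc: fixes a b :: int shows "a^2 - a*b - b^2 = 0 \<Longrightarrow> b = 0"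
proof (induction "nat \<bar>b\<bar>" arbitrary: a b rule: less_induct)
  case less
  show ?case
  proof (rule ccontr)
    assume b0: "b \<noteq> 0"
    have "(2*a - b)^2 = 4 * (a^2 - a*b - b^2) + 5 * b^2" by (simp add: algebra_simps power2_eq_square)
    then have h1: "(2*a - b)^2 = 5 * b^2" using less.prems by simp
    then have "(2*a-b)^2 mod 5 = 0" by simp
    then have "(2*a-b) mod 5 = 0" by (rule sq5)
    then obtain k where k: "2*a - b = 5*k" by (auto simp: mod_eq_0_iff_dvd dvd_def)
    have "25 * k^2 = 5 * b^2" using h1 k by (simp add: power_mult_distrib)
    then have h2: "b^2 = 5 * k^2" by simp
    then have "b^2 mod 5 = 0" by simp
    then have "b mod 5 = 0" by (rule sq5)
    then obtain m where m: "b = 5*m" by (auto simp: mod_eq_0_iff_dvd dvd_def)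
    have "2*a = 5*(k+m)" using k m by simp
    then have "(2*a) mod 5 = 0" by simp
    then have "a mod 5 = 0" by (rule dbl5)
    then obtain n where n: "a = 5*n" by (auto simp: mod_eq_0_iff_dvd dvd_def)
    have "25 * (n^2 - n*m - m^2) = 0" using less.prems n m by (simp add: algebra_simps power2_eq_square)
    then have "n^2 - n*m - m^2 = 0" by simp
    moreover have "nat \<bar>m\<bar> < nat \<bar>b\<bar>" using m b0 by auto
    ultimately have "m = 0" using less.hyps by blast
    then show False using m b0 by simp
  qed
qed

lemma lin_s:
  fixes a b :: int and s :: real
  assumes s: "s^2 + s - 1 = 0" and h: "of_int a + of_int b * s = 0"
  shows "a = 0 \<and> b = 0"
proof (cases "b = 0")
  case True then show ?thesis using h by simp
next
  case False
  then have bs: "s = - of_int a / of_int b" using h by (simp add: field_simps)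
  have "of_int (a^2 - a*b - b^2) = (of_int b)^2 * (s^2 + s - 1 :: real)"
    using False unfolding bs by (simp add: field_simps power2_eq_square)
  then have "of_int (a^2 - a*b - b^2) = (0::real)" using s by simp
  then have "a^2 - a*b - b^2 = 0" by (simp only: of_int_eq_0_iff)
  then show ?thesis using desc False by blast
qed

locale prim5 =
  fixes \<zeta> :: complex
  assumes z5: "\<zeta>^5 = 1" and z1: "\<zeta> \<noteq> 1"
begin

lemma phi: "phi5 \<zeta>"
proof -
  have "(\<zeta> - 1) * (\<zeta>^4 + \<zeta>^3 + \<zeta>^2 + \<zeta> + 1) = \<zeta>^5 - 1" by (simp add: algebra_simps eval_nat_numeral)
  then show ?thesis using z5 z1 by (simp add: phi5_def)
qed

lemma norm1: "norm \<zeta> = 1"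
proof -
  have "norm \<zeta> ^ 5 = 1" using z5 by (metis norm_one norm_power)
  then have "norm \<zeta> ^ 5 = 1 ^ 5" by simp
  then show ?thesis by (rule power_eq_imp_eq_base) auto
qed

lemma cnj_eq: "cnj \<zeta> = \<zeta>^4"
proof -
  have "\<zeta> * cnj \<zeta> = 1" using norm1 complex_norm_square[of \<zeta>] by simp
  moreover have "\<zeta> * \<zeta>^4 = 1" using z5 by (simp add: eval_nat_numeral)
  ultimately have "\<zeta> * cnj \<zeta> = \<zeta> * \<zeta>^4" by simp
  moreover have "\<zeta> \<noteq> 0" using z5 by auto
  ultimately show ?thesis by simp
qed

definition sr :: real where "sr = 2 * Re \<zeta>"

lemma s_eq: "\<zeta> + \<zeta>^4 = of_real sr"
  using complex_add_cnj[of \<zeta>] cnj_eq by (simp add: sr_def)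

lemma im_ne: "Im \<zeta> \<noteq> 0"
proof
  assume "Im \<zeta> = 0"
  then have e: "\<zeta> = of_real (Re \<zeta>)" by (simp add: complex_eq_iff)
  then have "\<bar>Re \<zeta>\<bar> = 1" using norm1 by (metis norm_of_real)
  then consider "Re \<zeta> = 1" | "Re \<zeta> = -1" by linarith
  then show False
  proof cases
    case 1 then show False using e z1 by simp
  next
    case 2 then have "\<zeta> = -1" using e by simp
    then show False using z5 by simp
  qed
qed

lemma s_quad: "sr^2 + sr - 1 = 0"
proof -
  have "(\<zeta> + \<zeta>^4)^2 + (\<zeta> + \<zeta>^4) - 1 = (\<zeta>^4 + \<zeta>^3 + \<zeta>^2 + \<zeta> + 1) + (\<zeta>^3 + 2) * (\<zeta>^5 - 1)"
    by (simp add: algebra_simps eval_nat_numeral)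
  also have "\<dots> = 0" using phi z5 by (simp add: phi5_def)
  finally have "of_real (sr^2 + sr - 1) = (0::complex)" unfolding s_eq by simp
  then show ?thesis by (simp only: of_real_eq_0_iff)
qed

lemma emb_zero:
  assumes "emb \<zeta> (a,b,c,d) = 0"
  shows "a = 0 \<and> b = 0 \<and> c = 0 \<and> d = 0"
proof -
  let ?s = "of_real sr :: complex"
  have z2: "\<zeta>^2 = ?s * \<zeta> - 1"
    unfolding s_eq[symmetric] using z5 by (simp add: algebra_simps eval_nat_numeral)
  have z3: "\<zeta>^3 = - ?s * \<zeta> - ?s"
  proof -
    have "- (\<zeta> + \<zeta>^4) * \<zeta> - (\<zeta> + \<zeta>^4) - \<zeta>^3 = - (\<zeta>^4 + \<zeta>^3 + \<zeta>^2 + \<zeta> + 1) - (\<zeta>^5 - 1)"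
      by (simp add: algebra_simps eval_nat_numeral)
    also have "\<dots> = 0" using phi z5 by (simp add: phi5_def)
    finally have "- ?s * \<zeta> - ?s - \<zeta>^3 = 0" unfolding s_eq .
    then show ?thesis by simp
  qed
  define X where "X = of_int a - of_int c - of_int d * sr"
  define Y where "Y = of_int b + of_int (c - d) * sr"
  have "emb \<zeta> (a,b,c,d) = of_real X + of_real Y * \<zeta>"
    unfolding X_def Y_def by (simp add: z2 z3 algebra_simps)
  then have e: "of_real X + of_real Y * \<zeta> = 0" using assms by simp
  have "Im (of_real X + of_real Y * \<zeta>) = Y * Im \<zeta>" by simp
  then have "Y * Im \<zeta> = 0" using e by simp
  then have Y0: "Y = 0" using im_ne by simp
  then have X0: "X = 0" using e by simp
  from Y0 have "b = 0 \<and> c - d = 0" using lin_s[OF s_quad, of b "c - d"] unfolding Y_def by simp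
  moreover from X0 have "a - c = 0 \<and> - d = 0" using lin_s[OF s_quad, of "a - c" "- d"] unfolding X_def by simp
  ultimately show ?thesis by simp
qed

lemma emb_inj:
  assumes "emb \<zeta> x = emb \<zeta> y" shows "x = y"
proof -
  obtain a b c d where x: "x = (a,b,c,d)" by (cases x) auto
  obtain a' b' c' d' where y: "y = (a',b',c',d')" by (cases y) auto
  have "emb \<zeta> (a-a', b-b', c-c', d-d') = emb \<zeta> x - emb \<zeta> y" unfolding x y by (simp add: algebra_simps)
  then have "emb \<zeta> (a-a', b-b', c-c', d-d') = 0" using assms by simp
  then show ?thesis using emb_zero unfolding x y by fastforce
qed

end

definition lpm :: "int fls^2^2 \<Rightarrow> bool" where
  "lpm M \<longleftrightarrow> (\<forall>i j. laurent_poly (M$i$j))"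

definition simp_set :: "int fls set" where
  "simp_set = {0, 1, fls_X, fls_X_inv, -fls_X, -fls_X_inv}"

lemma lp_mult_simple:
  assumes f: "laurent_poly f" and z: "z \<noteq> 0" and g: "g \<in> simp_set"
  shows "laurent_poly (f * g) \<and> laurent_eval z (f * g) = laurent_eval z f * laurent_eval z g"
proof -
  have sX: "f * fls_X = fls_shift (-1) f" by (simp add: fls_X_times_conv_shift)
  have sXi: "f * fls_X_inv = fls_shift 1 f" by (simp add: fls_X_inv_times_conv_shift)
  have A: "laurent_poly (f * fls_X) \<and> laurent_eval z (f * fls_X) = laurent_eval z f * laurent_eval z fls_X"
    unfolding sX using lp_shift[OF f z, of "-1"] lp_X[OF z] by (simp add: mult.commute)
  have B: "laurent_poly (f * fls_X_inv) \<and> laurent_eval z (f * fls_X_inv) = laurent_eval z f * laurent_eval z fls_X_inv"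
    unfolding sXi using lp_shift[OF f z, of "1"] lp_Xinv[OF z] by (simp add: mult.commute power_int_minus)
  have X2: "laurent_eval z (- fls_X) = - laurent_eval z fls_X" using lp_uminus lp_X[OF z] by blast
  have Xi2: "laurent_eval z (- fls_X_inv) = - laurent_eval z fls_X_inv" using lp_uminus lp_Xinv[OF z] by blast
  from g consider "g = 0" | "g = 1" | "g = fls_X" | "g = fls_X_inv" | "g = -fls_X" | "g = -fls_X_inv"
    unfolding simp_set_def by blast
  then show ?thesis
  proof cases
    case 1 then show ?thesis using lp_0 by simp
  next
    case 2 then show ?thesis using lp_1 f by simp
  next
    case 3 then show ?thesis using A by simp
  next
    case 4 then show ?thesis using B by simp
  next
    case 5 then show ?thesis using A lp_uminus[of "f * fls_X"] X2 by simp
  next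
    case 6 then show ?thesis using B lp_uminus[of "f * fls_X_inv"] Xi2 by simp
  qed
qed

lemma eval_mult_gen:
  fixes M G :: "int fls^2^2"
  assumes M: "lpm M" and z: "z \<noteq> 0" and G: "\<forall>k j. G$k$j \<in> simp_set"
  shows "lpm (M ** G) \<and> eval_mat z (M ** G) = eval_mat z M ** eval_mat z G"
proof -
  have e: "(M ** G)$i$j = M$i$1 * G$1$j + M$i$2 * G$2$j" for i j
    by (simp add: matrix_matrix_mult_def sum_2)
  have p: "laurent_poly (M$i$k * G$k$j) \<and> laurent_eval z (M$i$k * G$k$j) = laurent_eval z (M$i$k) * laurent_eval z (G$k$j)" for i k j
    using lp_mult_simple[of "M$i$k" z "G$k$j"] M z G unfolding lpm_def by blast
  have "laurent_poly ((M ** G)$i$j) \<and> laurent_eval z ((M ** G)$i$j) =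
      laurent_eval z (M$i$1) * laurent_eval z (G$1$j) + laurent_eval z (M$i$2) * laurent_eval z (G$2$j)" for i j
    unfolding e using lp_add[of "M$i$1 * G$1$j" "M$i$2 * G$2$j"] p by simp
  then show ?thesis
    by (simp add: lpm_def eval_mat_def vec_eq_iff matrix_matrix_mult_def sum_2)
qed

lemma Rq_simple: "\<forall>k j. Rq$k$j \<in> simp_set"
  by (simp add: Rq_def simp_set_def forall_2)
lemma Sq_simple: "\<forall>k j. Sq$k$j \<in> simp_set"
  by (simp add: Sq_def simp_set_def forall_2)
lemma Rqi_simple: "\<forall>k j. Rq_inv$k$j \<in> simp_set"
  by (simp add: Rq_inv_def simp_set_def forall_2)
lemma Sqi_simple: "\<forall>k j. Sq_inv$k$j \<in> simp_set"
  by (simp add: Sq_inv_def simp_set_def forall_2)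

lemma lpm_one: "lpm (mat 1)"
  by (simp add: lpm_def mat_def lp_0 lp_1)

lemma Gq_lpm: "M \<in> Gq \<Longrightarrow> lpm M"
proof (induction rule: Gq.induct)
  case one then show ?case by (rule lpm_one)
next
  case (mulR M) then show ?case using eval_mult_gen[OF _ _ Rq_simple, of M 1] by simp
next
  case (mulS M) then show ?case using eval_mult_gen[OF _ _ Sq_simple, of M 1] by simp
next
  case (mulRi M) then show ?case using eval_mult_gen[OF _ _ Rqi_simple, of M 1] by simp
next
  case (mulSi M) then show ?case using eval_mult_gen[OF _ _ Sqi_simple, of M 1] by simp
qed

definition Idt :: zm where "Idt = ((1,0,0,0),(0,0,0,0),(0,0,0,0),(1,0,0,0))"
definition Rt :: zm where "Rt = ((0,1,0,0),(1,0,0,0),(0,0,0,0),(1,0,0,0))"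
definition St :: zm where "St = ((0,0,0,0),(1,1,1,1),(1,0,0,0),(0,0,0,0))"
definition Rit :: zm where "Rit = (((-1),(-1),(-1),(-1)),(1,1,1,1),(0,0,0,0),(1,0,0,0))"
definition Sit :: zm where "Sit = ((0,0,0,0),(1,0,0,0),(0,(-1),0,0),(0,0,0,0))"

lemma phi5_ne0: "phi5 z \<Longrightarrow> z \<noteq> 0"
  by (auto simp: phi5_def)

lemma phi5_inv: "phi5 z \<Longrightarrow> inverse z = - (1 + z + z^2 + z^3)"
proof -
  assume a: "phi5 z"
  have "z * (1 + z + z^2 + z^3) = (z^4 + z^3 + z^2 + z + 1) - 1"
    by (simp add: algebra_simps eval_nat_numeral)
  also have "\<dots> = -1" using a by (simp add: phi5_def)
  finally have h: "z * (1 + z + z^2 + z^3) = -1" .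
  have "z * (- (1 + z + z^2 + z^3)) = 1" unfolding mult_minus_right h by simp
  then show ?thesis by (rule inverse_unique)
qed

lemma eval_mXi: "phi5 z \<Longrightarrow> laurent_eval z (- fls_X_inv) = 1 + z + z^2 + z^3"
  using phi5_ne0[of z] phi5_inv[of z] lp_uminus(2)[OF lp_Xinv(1), of z z] lp_Xinv(2)[of z] by simp

lemma eval_mX: "phi5 z \<Longrightarrow> laurent_eval z (- fls_X) = - z"
  using phi5_ne0[of z] lp_uminus(2)[OF lp_X(1), of z z] lp_X(2)[of z] by simp

lemma eval_Xi: "phi5 z \<Longrightarrow> laurent_eval z fls_X_inv = - (1 + z + z^2 + z^3)"
  using phi5_ne0[of z] phi5_inv[of z] lp_Xinv(2)[of z] by simp

lemma eval_X: "phi5 z \<Longrightarrow> laurent_eval z fls_X = z"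
  using phi5_ne0[of z] lp_X(2)[of z] by simp

lemma eval_one: "eval_mat z (mat 1) = embm z Idt"
  by (simp add: eval_mat_def Idt_def vec_eq_iff forall_2 mat_def lp_0 lp_1)

lemma eval_R: "phi5 z \<Longrightarrow> eval_mat z Rq = embm z Rt"
  by (simp add: eval_mat_def Rt_def Rq_def vec_eq_iff forall_2 lp_0 lp_1 eval_X)

lemma eval_S: "phi5 z \<Longrightarrow> eval_mat z Sq = embm z St"
  by (simp add: eval_mat_def St_def Sq_def vec_eq_iff forall_2 lp_0 lp_1 eval_mXi)

lemma eval_Ri: "phi5 z \<Longrightarrow> eval_mat z Rq_inv = embm z Rit"
  using eval_Xi[of z] eval_mXi[of z]
  by (simp add: eval_mat_def Rit_def Rq_inv_def vec_eq_iff forall_2 lp_0 lp_1 algebra_simps)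

lemma eval_Si: "phi5 z \<Longrightarrow> eval_mat z Sq_inv = embm z Sit"
  by (simp add: eval_mat_def Sit_def Sq_inv_def vec_eq_iff forall_2 lp_0 lp_1 eval_mX)

definition Ns :: "zm list" where "Ns = [((1, 0, 0, 0), (0, 0, 0, 0), (0, 0, 0, 0), (1, 0, 0, 0)),
  (((-1), (-2), (-1), (-1)), (0, 1, 1, 1), ((-1), (-1), 0, 0), (1, 2, 1, 1)),
  (((-1), (-1), (-2), (-1)), (0, 0, 1, 1), ((-1), (-1), (-1), 0), (0, 1, 1, 0)),
  (((-1), (-1), (-1), (-1)), (0, 0, 0, 0), ((-1), (-1), 0, 0), (0, 1, 0, 0)),
  (((-1), (-1), (-1), (-1)), (0, 0, 0, 1), ((-1), (-1), 0, 0), (1, 1, 1, 1)),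
  (((-1), (-1), (-1), (-1)), (0, 0, 1, 1), ((-1), 0, 0, 0), (1, 1, 1, 1)),
  (((-1), (-1), (-1), (-1)), (0, 1, 1, 1), ((-1), (-1), (-1), (-1)), (1, 1, 1, 1)),
  (((-1), (-1), (-1), (-1)), (0, 1, 1, 1), (0, 0, 0, 0), (0, 1, 0, 0)),
  (((-1), (-1), (-1), (-1)), (1, 1, 1, 1), ((-1), (-1), (-1), 0), (1, 1, 1, 1)),
  (((-1), (-1), (-1), (-1)), (1, 1, 1, 1), ((-1), 0, 0, 0), (1, 1, 0, 0)),
  (((-1), (-1), (-1), 0), (0, 0, 1, 0), ((-1), 0, 0, 1), (1, 1, 1, 0)),
  (((-1), (-1), (-1), 0), (0, 1, 1, 0), ((-1), 0, 0, 1), (1, 1, 1, 0)),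
  (((-1), (-1), (-1), 0), (0, 1, 1, 0), (0, 0, 1, 1), (0, 1, 0, (-1))),
  (((-1), (-1), (-1), 0), (0, 1, 1, 1), ((-1), 0, 0, 1), (1, 1, 1, 0)),
  (((-1), (-1), (-1), 0), (1, 1, 1, 1), ((-1), 0, 0, 1), (1, 1, 1, 0)),
  (((-1), (-1), (-1), 0), (1, 1, 2, 1), ((-1), (-1), 0, 0), (1, 1, 1, 0)),
  (((-1), (-1), (-1), 0), (1, 1, 2, 1), ((-1), 0, 0, 0), (1, 1, 1, 0)),
  (((-1), (-1), (-1), 0), (1, 1, 2, 1), ((-1), 0, 0, 1), (1, 1, 1, 0)),
  (((-1), (-1), (-1), 0), (1, 1, 2, 1), (0, 0, 0, 1), (1, 1, 1, 0)),
  (((-1), (-1), (-1), 0), (1, 1, 2, 1), (0, 0, 1, 1), (1, 1, 1, 0)),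
  (((-1), 0, 0, 0), (1, 1, 0, 0), (0, 1, 1, 1), (0, 0, (-1), (-1))),
  (((-1), 0, 0, 0), (1, 1, 1, 0), (0, 1, 1, 0), (0, 0, (-1), (-1))),
  ((0, (-1), (-1), (-1)), ((-1), 0, 0, 0), (0, (-1), 0, 0), (0, 1, 0, 0)),
  ((0, (-1), (-1), (-1)), (0, 0, 0, 1), ((-1), (-1), (-1), 0), (1, 1, 1, 1)),
  ((0, (-1), (-1), (-1)), (0, 0, 1, 1), ((-1), (-1), (-1), (-1)), (1, 1, 1, 1)),
  ((0, (-1), (-1), 0), (0, 0, 1, 0), ((-1), (-1), 0, 0), (1, 1, 1, 0)),
  ((0, (-1), (-1), 0), (0, 1, 1, 1), (0, 0, 0, 1), (1, 1, 1, 0)),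
  ((0, (-1), 0, 0), (0, 1, 0, 0), (0, 0, 1, 1), (1, 1, 0, 0)),
  ((0, (-1), 0, 0), (0, 1, 1, 0), (0, 0, 1, 0), (1, 1, 0, 0)),
  ((0, 0, (-1), (-1)), ((-1), (-1), (-1), 0), (0, (-1), (-1), 0), ((-1), 0, 0, 0)),
  ((0, 0, (-1), (-1)), ((-1), (-1), 0, 0), (0, (-1), (-1), (-1)), ((-1), 0, 0, 0)),
  ((0, 0, (-1), (-1)), (0, (-1), 0, 0), ((-1), (-1), (-1), (-1)), (0, 0, 0, 0)),
  ((0, 0, (-1), (-1)), (0, 0, 0, 1), (0, 0, (-1), 0), (0, 0, 0, 0)),
  ((0, 0, (-1), 0), (0, 0, 0, 0), (0, 0, 0, 1), (0, 0, 0, (-1))),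
  ((0, 0, (-1), 0), (0, 0, 1, 0), (0, 0, 0, 0), (0, 0, 0, (-1))),
  ((0, 0, 0, (-1)), (0, 0, (-1), 0), (0, 0, 0, 0), (0, 0, (-1), 0)),
  ((0, 0, 0, (-1)), (0, 0, 0, 0), (0, 0, 0, (-1)), (0, 0, (-1), 0)),
  ((0, 0, 0, 0), ((-1), (-1), (-1), (-1)), ((-1), 0, 0, 0), (0, 0, 0, 0)),
  ((0, 0, 0, 0), (0, 0, 0, (-1)), (0, 0, 1, 0), (0, 0, (-1), (-1))),
  ((0, 0, 0, 0), (0, 1, 0, 0), (1, 1, 1, 1), (0, 0, (-1), (-1))),
  ((0, 0, 0, 0), (1, 0, 0, 0), ((-1), 0, 0, 0), (1, 0, 0, 0)),
  ((0, 0, 0, 0), (1, 1, 1, 1), (0, 1, 0, 0), (1, 0, 0, 0)),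
  ((0, 0, 0, 1), (1, 1, 1, 0), (0, 1, 1, 1), (1, 0, 0, (-1))),
  ((0, 0, 1, 0), (1, 1, 0, 0), (0, 1, 1, 0), (1, 0, (-1), 0)),
  ((0, 1, 0, (-1)), (0, (-1), (-1), 0), (0, 0, (-1), (-1)), ((-1), (-1), (-1), 0)),
  ((0, 1, 0, 0), (0, (-1), (-1), (-1)), (0, 0, 0, 0), ((-1), (-1), (-1), (-1))),
  ((0, 1, 0, 0), (0, 0, 0, 0), (1, 1, 0, 0), ((-1), (-1), (-1), (-1))),
  ((0, 1, 0, 0), (1, 0, 0, 0), (0, 1, 0, 0), (0, (-1), (-1), (-1))),
  ((0, 1, 1, 0), (0, 0, (-1), (-1)), (1, 1, 1, 0), ((-1), (-1), (-2), (-1))),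
  ((1, 0, (-1), 0), ((-1), (-1), 0, 0), (0, (-1), (-1), 0), (0, 0, 1, 0)),
  ((1, 0, 0, (-1)), ((-1), (-1), (-1), 0), (0, (-1), (-1), (-1)), (0, 0, 0, 1)),
  ((1, 0, 0, 0), ((-1), (-1), (-1), (-1)), (0, (-1), 0, 0), (0, 0, 0, 0)),
  ((1, 0, 0, 0), ((-1), 0, 0, 0), (1, 0, 0, 0), (0, 0, 0, 0)),
  ((1, 1, 0, 0), ((-1), (-1), (-1), (-1)), (1, 0, 0, 0), ((-1), (-1), (-1), (-1))),
  ((1, 1, 0, 0), (0, (-1), (-1), 0), (0, 0, (-1), 0), (0, (-1), 0, 0)),
  ((1, 1, 0, 0), (0, (-1), 0, 0), (0, 0, (-1), (-1)), (0, (-1), 0, 0)),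
  ((1, 1, 1, 0), (0, (-1), (-1), (-1)), (0, 0, 0, (-1)), (0, (-1), (-1), 0)),
  ((1, 1, 1, 0), (0, 0, (-1), 0), (1, 1, 0, 0), (0, (-1), (-1), 0)),
  ((1, 1, 1, 1), (0, 0, (-1), (-1)), (1, 1, 1, 1), (0, (-1), (-1), (-1))),
  ((1, 1, 1, 1), (0, 0, 0, (-1)), (1, 1, 1, 0), (0, (-1), (-1), (-1)))]"

definition SC :: "zt list" where "SC = [(1, 0, 0, 0),
  (0, 1, 0, 0),
  (0, 0, 1, 0),
  (0, 0, 0, 1),
  ((-1), (-1), (-1), (-1)),
  ((-1), 0, 0, 0),
  (0, (-1), 0, 0),
  (0, 0, (-1), 0),
  (0, 0, 0, (-1)),
  (1, 1, 1, 1)]"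

definition TG :: "zt list" where "TG = [(0,0,0,0), ((-1),0,(-1),(-1)), (1,0,0,0), (0,0,(-1),(-1)), (2,0,0,0)]"

definition WR :: "(zt \<times> nat) list" where "WR = [((0, 0, 0, (-1)), 35),
  ((0, 0, 0, (-1)), 2),
  ((0, 0, 0, (-1)), 49),
  ((0, 1, 0, 0), 4),
  (((-1), 0, 0, 0), 21),
  ((1, 1, 1, 1), 28),
  ((1, 0, 0, 0), 52),
  ((0, 0, 0, (-1)), 34),
  (((-1), (-1), (-1), (-1)), 46),
  ((0, 0, 0, (-1)), 33),
  ((0, 1, 0, 0), 13),
  ((0, 1, 0, 0), 14),
  ((0, 0, 0, (-1)), 25),
  ((0, 1, 0, 0), 17),
  ((0, 1, 0, 0), 10),
  ((0, 0, (-1), 0), 30),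
  ((0, 0, 0, (-1)), 26),
  ((0, 1, 0, 0), 11),
  ((1, 0, 0, 0), 24),
  ((0, 1, 0, 0), 12),
  ((0, 0, (-1), 0), 8),
  ((0, 0, 0, (-1)), 42),
  ((0, 0, 0, (-1)), 31),
  ((0, 0, 0, (-1)), 29),
  ((0, 0, 0, (-1)), 32),
  ((0, 0, 0, (-1)), 23),
  ((0, 0, 0, (-1)), 22),
  ((0, 0, 0, (-1)), 3),
  ((0, 0, 0, (-1)), 9),
  (((-1), 0, 0, 0), 19),
  ((0, 0, 0, (-1)), 55),
  ((0, 0, 0, (-1)), 54),
  ((0, 0, 0, (-1)), 53),
  ((0, 0, 0, (-1)), 51),
  ((0, 0, 0, (-1)), 0),
  ((0, 0, 0, (-1)), 45),
  ((0, 0, 0, (-1)), 47),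
  (((-1), 0, 0, 0), 41),
  ((0, 0, 0, (-1)), 40),
  ((0, 0, 0, (-1)), 38),
  ((0, 1, 0, 0), 37),
  ((0, 0, 0, (-1)), 39),
  ((0, 0, 0, (-1)), 27),
  ((0, 0, 0, (-1)), 20),
  ((0, 0, 0, 1), 1),
  ((0, 0, 0, 1), 7),
  ((0, 0, 0, (-1)), 59),
  ((0, 0, 0, (-1)), 58),
  (((-1), (-1), (-1), (-1)), 15),
  ((0, 0, 0, (-1)), 50),
  ((0, 0, 0, (-1)), 44),
  ((0, 0, 1, 0), 5),
  ((0, 0, 0, (-1)), 36),
  ((0, 0, 0, (-1)), 56),
  ((0, 0, 0, 1), 16),
  ((0, 0, 0, (-1)), 57),
  ((0, (-1), 0, 0), 18),
  ((0, 0, 0, (-1)), 48),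
  ((0, (-1), 0, 0), 6),
  ((0, 0, 0, (-1)), 43)]"

definition WS :: "(zt \<times> nat) list" where "WS = [(((-1), 0, 0, 0), 37),
  ((0, (-1), 0, 0), 17),
  (((-1), (-1), (-1), (-1)), 19),
  ((0, 0, (-1), 0), 39),
  (((-1), (-1), (-1), (-1)), 9),
  ((0, 0, 0, 1), 22),
  ((1, 1, 1, 1), 53),
  ((0, 0, 1, 0), 31),
  ((0, 0, 0, (-1)), 47),
  (((-1), 0, 0, 0), 4),
  (((-1), (-1), (-1), (-1)), 42),
  ((1, 0, 0, 0), 48),
  ((0, 0, 0, 1), 13),
  ((0, (-1), 0, 0), 12),
  ((0, 0, (-1), 0), 43),
  ((0, 1, 0, 0), 44),
  ((0, 0, 1, 0), 49),
  ((0, 0, 0, 1), 1),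
  ((1, 1, 1, 1), 50),
  (((-1), 0, 0, 0), 2),
  ((0, 0, (-1), 0), 57),
  ((0, 0, 1, 0), 25),
  ((0, (-1), 0, 0), 5),
  ((0, 0, (-1), 0), 28),
  ((0, 0, 1, 0), 54),
  ((0, 0, (-1), 0), 21),
  ((0, 0, 1, 0), 29),
  ((0, 0, (-1), 0), 59),
  ((0, 0, 1, 0), 23),
  ((0, 0, (-1), 0), 26),
  ((0, 0, 1, 0), 56),
  ((0, 0, (-1), 0), 7),
  ((0, 0, 1, 0), 45),
  ((0, 0, (-1), 0), 41),
  ((0, 0, 1, 0), 51),
  ((0, 0, (-1), 0), 52),
  ((0, 0, 1, 0), 40),
  (((-1), (-1), (-1), (-1)), 0),
  ((0, 0, (-1), 0), 46),
  ((0, 0, 1, 0), 3),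
  ((0, 0, (-1), 0), 36),
  ((0, 0, 1, 0), 33),
  (((-1), 0, 0, 0), 10),
  ((0, 0, 1, 0), 14),
  ((0, 0, 0, (-1)), 15),
  ((0, 0, (-1), 0), 32),
  ((0, 0, 1, 0), 38),
  ((0, 1, 0, 0), 8),
  ((1, 1, 1, 1), 11),
  ((0, 0, (-1), 0), 16),
  ((1, 0, 0, 0), 18),
  ((0, 0, (-1), 0), 34),
  ((0, 0, 1, 0), 35),
  ((1, 0, 0, 0), 6),
  ((0, 0, (-1), 0), 24),
  ((0, 0, 1, 0), 58),
  ((0, 0, (-1), 0), 30),
  ((0, 0, 1, 0), 20),
  ((0, 0, (-1), 0), 55),
  ((0, 0, 1, 0), 27)]"

definition WRi :: "(zt \<times> nat) list" where "WRi = [((0, 0, (-1), 0), 34),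
  ((0, 0, 1, 0), 44),
  ((0, 0, (-1), 0), 1),
  ((0, 0, (-1), 0), 27),
  (((-1), (-1), (-1), (-1)), 3),
  ((0, 0, 0, 1), 51),
  ((1, 1, 1, 1), 58),
  ((0, 0, 1, 0), 45),
  ((0, 0, 0, (-1)), 20),
  ((0, 0, (-1), 0), 28),
  (((-1), (-1), (-1), (-1)), 14),
  (((-1), (-1), (-1), (-1)), 17),
  (((-1), (-1), (-1), (-1)), 19),
  (((-1), (-1), (-1), (-1)), 10),
  (((-1), (-1), (-1), (-1)), 11),
  ((0, 1, 0, 0), 48),
  ((0, 0, 1, 0), 54),
  (((-1), (-1), (-1), (-1)), 13),
  ((1, 1, 1, 1), 56),
  (((-1), 0, 0, 0), 29),
  ((0, 0, (-1), 0), 43),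
  (((-1), 0, 0, 0), 4),
  ((0, 0, (-1), 0), 26),
  ((0, 0, (-1), 0), 25),
  ((1, 0, 0, 0), 18),
  ((0, 0, (-1), 0), 12),
  ((0, 0, (-1), 0), 16),
  ((0, 0, (-1), 0), 42),
  ((0, (-1), 0, 0), 5),
  ((0, 0, (-1), 0), 23),
  ((0, 0, 0, (-1)), 15),
  ((0, 0, (-1), 0), 22),
  ((0, 0, (-1), 0), 24),
  ((0, 0, (-1), 0), 9),
  ((0, 0, (-1), 0), 7),
  ((0, 0, (-1), 0), 0),
  ((0, 0, (-1), 0), 52),
  (((-1), (-1), (-1), (-1)), 40),
  ((0, 0, (-1), 0), 39),
  ((0, 0, (-1), 0), 41),
  ((0, 0, (-1), 0), 38),
  (((-1), 0, 0, 0), 37),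
  ((0, 0, (-1), 0), 21),
  ((0, 0, (-1), 0), 59),
  ((0, 0, (-1), 0), 50),
  ((0, 0, (-1), 0), 35),
  ((0, 1, 0, 0), 8),
  ((0, 0, (-1), 0), 36),
  ((0, 0, (-1), 0), 57),
  ((0, 0, (-1), 0), 2),
  ((0, 0, (-1), 0), 49),
  ((0, 0, (-1), 0), 33),
  ((1, 0, 0, 0), 6),
  ((0, 0, (-1), 0), 32),
  ((0, 0, (-1), 0), 31),
  ((0, 0, (-1), 0), 30),
  ((0, 0, (-1), 0), 53),
  ((0, 0, (-1), 0), 55),
  ((0, 0, (-1), 0), 47),
  ((0, 0, (-1), 0), 46)]"

definition WSi :: "(zt \<times> nat) list" where "WSi = [((0, 1, 0, 0), 37),
  ((0, 0, 1, 0), 17),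
  (((-1), 0, 0, 0), 19),
  ((0, 0, 0, 1), 39),
  (((-1), 0, 0, 0), 9),
  ((1, 1, 1, 1), 22),
  ((1, 0, 0, 0), 53),
  ((0, 0, 0, (-1)), 31),
  (((-1), (-1), (-1), (-1)), 47),
  ((0, 1, 0, 0), 4),
  (((-1), 0, 0, 0), 42),
  ((0, (-1), 0, 0), 48),
  ((1, 1, 1, 1), 13),
  ((0, 0, 1, 0), 12),
  ((0, 0, 0, 1), 43),
  ((0, 0, (-1), 0), 44),
  ((0, 0, 0, (-1)), 49),
  ((1, 1, 1, 1), 1),
  ((1, 0, 0, 0), 50),
  ((0, 1, 0, 0), 2),
  ((0, 0, 0, 1), 57),
  ((0, 0, 0, (-1)), 25),
  ((0, 0, 1, 0), 5),
  ((0, 0, 0, 1), 28),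
  ((0, 0, 0, (-1)), 54),
  ((0, 0, 0, 1), 21),
  ((0, 0, 0, (-1)), 29),
  ((0, 0, 0, 1), 59),
  ((0, 0, 0, (-1)), 23),
  ((0, 0, 0, 1), 26),
  ((0, 0, 0, (-1)), 56),
  ((0, 0, 0, 1), 7),
  ((0, 0, 0, (-1)), 45),
  ((0, 0, 0, 1), 41),
  ((0, 0, 0, (-1)), 51),
  ((0, 0, 0, 1), 52),
  ((0, 0, 0, (-1)), 40),
  (((-1), 0, 0, 0), 0),
  ((0, 0, 0, 1), 46),
  ((0, 0, 0, (-1)), 3),
  ((0, 0, 0, 1), 36),
  ((0, 0, 0, (-1)), 33),
  ((0, 1, 0, 0), 10),
  ((0, 0, 0, (-1)), 14),
  (((-1), (-1), (-1), (-1)), 15),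
  ((0, 0, 0, 1), 32),
  ((0, 0, 0, (-1)), 38),
  ((0, 0, (-1), 0), 8),
  ((1, 0, 0, 0), 11),
  ((0, 0, 0, 1), 16),
  ((0, (-1), 0, 0), 18),
  ((0, 0, 0, 1), 34),
  ((0, 0, 0, (-1)), 35),
  ((0, (-1), 0, 0), 6),
  ((0, 0, 0, 1), 24),
  ((0, 0, 0, (-1)), 58),
  ((0, 0, 0, 1), 30),
  ((0, 0, 0, (-1)), 20),
  ((0, 0, 0, 1), 55),
  ((0, 0, 0, (-1)), 27)]"

lemma chk_R: "list_all (\<lambda>(N,(c,j)). tmm N Rt = tscale c (Ns ! j) \<and> j < length Ns \<and> c \<in> set SC) (zip Ns WR) \<and> length WR = length Ns"
  by (simp add: Ns_def WR_def SC_def Rt_def)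

lemma chk_S: "list_all (\<lambda>(N,(c,j)). tmm N St = tscale c (Ns ! j) \<and> j < length Ns \<and> c \<in> set SC) (zip Ns WS) \<and> length WS = length Ns"
  by (simp add: Ns_def WS_def SC_def St_def)

lemma chk_Ri: "list_all (\<lambda>(N,(c,j)). tmm N Rit = tscale c (Ns ! j) \<and> j < length Ns \<and> c \<in> set SC) (zip Ns WRi) \<and> length WRi = length Ns"
  by (simp add: Ns_def WRi_def SC_def Rit_def)

lemma chk_Si: "list_all (\<lambda>(N,(c,j)). tmm N Sit = tscale c (Ns ! j) \<and> j < length Ns \<and> c \<in> set SC) (zip Ns WSi) \<and> length WSi = length Ns"
  by (simp add: Ns_def WSi_def SC_def Sit_def)

lemma chk_SC: "\<forall>c\<in>set SC. \<forall>d\<in>set SC. tmul c d \<in> set SC"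
  by (simp add: SC_def)

lemma chk_TG: "\<forall>N\<in>set Ns. ttr N \<in> set TG"
  by (simp add: Ns_def TG_def)

definition bsum :: "int fls \<Rightarrow> int \<Rightarrow> int" where
  "bsum f r = (\<Sum>k\<in>{k. fls_nth f k \<noteq> 0 \<and> k mod 5 = r}. fls_nth f k)"

lemma powi_mod5:
  fixes z :: complex
  assumes "z^5 = 1"
  shows "z powi k = z ^ nat (k mod 5)"
proof -
  have z0: "z \<noteq> 0" using assms by auto
  have "z powi k = z powi (5 * (k div 5) + k mod 5)" by simp
  also have "\<dots> = z powi (5 * (k div 5)) * z powi (k mod 5)"
    using z0 by (rule power_int_add[OF disjI1])
  also have "z powi (5 * (k div 5)) = (z powi 5) powi (k div 5)"
    by (rule power_int_mult)
  also have "z powi 5 = 1" using assms by (simp add: power_int_def)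
  also have "z powi (k mod 5) = z ^ nat (k mod 5)" by (simp add: power_int_def)
  finally show ?thesis by simp
qed

lemma resid_sum:
  fixes z :: complex
  assumes f: "laurent_poly f" and z: "z^5 = 1"
  shows "laurent_eval z f = (\<Sum>r\<in>{0,1,2,3,4}. of_int (bsum f r) * z ^ nat r)"
proof -
  let ?S = "{k. fls_nth f k \<noteq> 0}"
  have fS: "finite ?S" using f by (simp add: laurent_poly_def)
  have "laurent_eval z f = (\<Sum>k\<in>?S. of_int (fls_nth f k) * z ^ nat (k mod 5))"
    unfolding laurent_eval_def using powi_mod5[OF z] by simp
  also have "\<dots> = (\<Sum>r\<in>{0,1,2,3,4}. \<Sum>k\<in>{k \<in> ?S. k mod 5 = r}. of_int (fls_nth f k) * z ^ nat (k mod 5))"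
  proof (rule sum.group[symmetric])
    show "finite ?S" by (rule fS)
    show "finite {0,1,2,3,4::int}" by simp
    show "(\<lambda>k. k mod 5) ` ?S \<subseteq> {0,1,2,3,4}"
    proof
      fix x assume "x \<in> (\<lambda>k. k mod 5) ` ?S"
      then obtain k where "x = k mod 5" by auto
      moreover have "k mod 5 \<ge> 0" "k mod (5::int) < 5" by auto
      ultimately show "x \<in> {0,1,2,3,4}" by auto
    qed
  qed
  also have "\<dots> = (\<Sum>r\<in>{0,1,2,3,4}. of_int (bsum f r) * z ^ nat r)"
  proof (rule sum.cong[OF refl])
    fix r :: int
    have "(\<Sum>k\<in>{k \<in> ?S. k mod 5 = r}. of_int (fls_nth f k) * z ^ nat (k mod 5))
        = (\<Sum>k\<in>{k \<in> ?S. k mod 5 = r}. of_int (fls_nth f k) * z ^ nat r)"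
      by (rule sum.cong) auto
    also have "\<dots> = of_int (bsum f r) * z ^ nat r"
      unfolding bsum_def by (simp add: sum_distrib_right)
    finally show "(\<Sum>k\<in>{k \<in> ?S. k mod 5 = r}. of_int (fls_nth f k) * z ^ nat (k mod 5)) = of_int (bsum f r) * z ^ nat r" .
  qed
  finally show ?thesis .
qed

context prim5 begin

lemma eval_resid:
  assumes f: "laurent_poly f"
  shows "laurent_eval \<zeta> f = emb \<zeta> (bsum f 0 - bsum f 4, bsum f 1 - bsum f 4, bsum f 2 - bsum f 4, bsum f 3 - bsum f 4)"
    and "laurent_eval 1 f = of_int (bsum f 0 + bsum f 1 + bsum f 2 + bsum f 3 + bsum f 4)"
proof -
  have z4: "\<zeta>^4 = -(\<zeta>^3 + \<zeta>^2 + \<zeta> + 1)"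
  proof -
    have h: "\<zeta>^4 + (\<zeta>^3 + \<zeta>^2 + \<zeta> + 1) = 0" using phi by (simp add: phi5_def add.assoc)
    then show ?thesis using eq_neg_iff_add_eq_0 by blast
  qed
  show "laurent_eval \<zeta> f = emb \<zeta> (bsum f 0 - bsum f 4, bsum f 1 - bsum f 4, bsum f 2 - bsum f 4, bsum f 3 - bsum f 4)"
    unfolding resid_sum[OF f z5] by (simp add: z4 algebra_simps)
  show "laurent_eval 1 f = of_int (bsum f 0 + bsum f 1 + bsum f 2 + bsum f 3 + bsum f 4)"
    unfolding resid_sum[OF f, of 1, simplified] by simp
qed

end

lemma dvd_eval:
  assumes d: "laurent_dvd qint5 f" and p: "phi5 z"
  shows "laurent_eval z f = 0"
proof -
  obtain g where g: "laurent_poly g" and f: "f = qint5 * g" using d by (auto simp: laurent_dvd_def)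
  have z0: "z \<noteq> 0" using p by (rule phi5_ne0)
  have e: "qint5 * g = fls_shift (-4) g + fls_shift (-3) g + fls_shift (-2) g + fls_shift (-1) g + g"
    by (simp add: qint5_def distrib_right fls_X_power_times_conv_shift fls_X_times_conv_shift)
  have L: "laurent_poly (fls_shift m g)" "laurent_eval z (fls_shift m g) = z powi (-m) * laurent_eval z g" for m
    using lp_shift[OF g z0] by auto
  have "laurent_eval z (qint5 * g) = (z^4 + z^3 + z^2 + z + 1) * laurent_eval z g"
    unfolding e by (simp add: lp_add L g algebra_simps)
  then show ?thesis using p f by (simp add: phi5_def)
qed

lemma dvd_construct:
  fixes f :: "int fls"
  assumes f: "laurent_poly f" and b: "\<forall>r\<in>{0,1,2,3}. bsum f r = bsum f 4"
  shows "laurent_dvd qint5 f"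
proof -
  define S where "S = {k. fls_nth f k \<noteq> 0}"
  have fS: "finite S" using f by (simp add: laurent_poly_def S_def)
  define L where "L = Max (insert 0 (abs ` S))"
  have L: "\<bar>k\<bar> \<le> L" if "k \<in> S" for k
    unfolding L_def using fS that by (intro Max_ge) auto
  have L0: "0 \<le> L" unfolding L_def using fS by (intro Max_ge) auto
  define A where "A m = (\<Sum>k\<in>{k\<in>S. k \<le> m \<and> k mod 5 = m mod 5}. fls_nth f k)" for m
  define gf where "gf n = A n - A (n - 1)" for n
  have A_low: "A m = 0" if "m < - L" for m
  proof -
    have e: "{k\<in>S. k \<le> m \<and> k mod 5 = m mod 5} = {}" using L that by force
    show ?thesis unfolding A_def e by simp
  qed
  have bmod: "bsum f (m mod 5) = bsum f 4" for m
  proof -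
    have "m mod 5 \<in> {0,1,2,3,4}" by auto
    then show ?thesis using b by auto
  qed
  have A_high: "A m = bsum f 4" if "m > L" for m
  proof -
    have e: "{k\<in>S. k \<le> m \<and> k mod 5 = m mod 5} = {k. fls_nth f k \<noteq> 0 \<and> k mod 5 = m mod 5}"
      using L that unfolding S_def by force
    show ?thesis using bmod[of m] unfolding A_def e bsum_def by simp
  qed
  have gf_low: "gf n = 0" if "n < - L" for n using A_low that by (simp add: gf_def)
  have gf_high: "gf n = 0" if "n > L + 1" for n using A_high that by (simp add: gf_def)
  have A_step: "A n - A (n - 5) = fls_nth f n" for n
  proof -
    have m: "(n - 5) mod 5 = n mod 5" by (simp add: mod_diff_right_eq[symmetric])
    have key: "k = n" if "k \<le> n" "k mod 5 = n mod 5" "\<not> k \<le> n - 5" for k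
    proof -
      have "5 dvd (k - n)" using that(2) by (simp add: mod_eq_dvd_iff)
      then obtain q where q: "k - n = 5 * q" by (auto simp: dvd_def)
      have "5 * q \<le> 0" "-5 < 5 * q" using q that by linarith+
      then have "q = 0" by linarith
      then show "k = n" using q by simp
    qed
    have "{k\<in>S. k \<le> n \<and> k mod 5 = n mod 5} = {k\<in>S. k \<le> n - 5 \<and> k mod 5 = (n - 5) mod 5} \<union> (S \<inter> {n})"
      unfolding m using key by auto
    then have "A n = A (n - 5) + (\<Sum>k\<in>S \<inter> {n}. fls_nth f k)"
      unfolding A_def using fS by (subst sum.union_disjoint[symmetric]) auto
    moreover have "(\<Sum>k\<in>S \<inter> {n}. fls_nth f k) = fls_nth f n"
      by (cases "n \<in> S") (auto simp: S_def)
    ultimately show ?thesis by simp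
  qed
  define g where "g = Abs_fls gf"
  have gn: "fls_nth g n = gf n" for n
    unfolding g_def by (rule nth_Abs_fls_ex_lower_bound) (use gf_low in blast)
  have lpg: "laurent_poly g"
  proof -
    have "{n. fls_nth g n \<noteq> 0} \<subseteq> {-L..L+1}" using gf_low gf_high by (force simp: gn)
    then show ?thesis unfolding laurent_poly_def using finite_subset by blast
  qed
  have "f = qint5 * g"
  proof (rule fls_eqI)
    fix n
    have e: "qint5 * g = fls_shift (-4) g + fls_shift (-3) g + fls_shift (-2) g + fls_shift (-1) g + g"
      by (simp add: qint5_def distrib_right fls_X_power_times_conv_shift fls_X_times_conv_shift)
    have "fls_nth (qint5 * g) n = gf (n - 4) + gf (n - 3) + gf (n - 2) + gf (n - 1) + gf n"
      unfolding e by (simp add: gn)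
    also have "\<dots> = A n - A (n - 5)" by (simp add: gf_def algebra_simps)
    also have "\<dots> = fls_nth f n" by (rule A_step)
    finally show "fls_nth f n = fls_nth (qint5 * g) n" by simp
  qed
  then show ?thesis using lpg by (auto simp: laurent_dvd_def)
qed

lemma zip_all:
  assumes "list_all P (zip xs ys)" "length ys = length xs" "x \<in> set xs"
  shows "\<exists>y. P (x, y)"
proof -
  obtain i where i: "i < length xs" "x = xs ! i" using assms(3) by (auto simp: in_set_conv_nth)
  have "(xs ! i, ys ! i) \<in> set (zip xs ys)" using i assms(2) by (metis in_set_zip fst_conv snd_conv)
  then show ?thesis using assms(1) i by (auto simp: list_all_iff)
qed

lemma cs_one: "cs 1 A = A" by (simp add: cs_def vec_eq_iff)

lemma trace_eval: "lpm M \<Longrightarrow> laurent_poly (trace M) \<and> laurent_eval z (trace M) = trace (eval_mat z M)"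
  unfolding lpm_def trace_def sum_2 eval_mat_def using lp_add by simp

context prim5 begin

definition TT :: "(complex^2^2) set" where
  "TT = {cs (emb \<zeta> c) (embm \<zeta> N) | c N. c \<in> set SC \<and> N \<in> set Ns}"

lemma TT_mul:
  assumes chk: "list_all (\<lambda>(N,(c,j)). tmm N g = tscale c (Ns ! j) \<and> j < length Ns \<and> c \<in> set SC) (zip Ns W) \<and> length W = length Ns"
    and A: "A \<in> TT"
  shows "A ** embm \<zeta> g \<in> TT"
proof -
  obtain c N where A: "A = cs (emb \<zeta> c) (embm \<zeta> N)" and c: "c \<in> set SC" and N: "N \<in> set Ns"
    using A by (auto simp: TT_def)
  obtain c' j where h: "tmm N g = tscale c' (Ns ! j)" "j < length Ns" "c' \<in> set SC"
    using zip_all[of _ Ns W N] chk N by fastforce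
  have "A ** embm \<zeta> g = cs (emb \<zeta> c) (embm \<zeta> (tmm N g))"
    unfolding A cs_mult embm_mm[OF phi] ..
  also have "\<dots> = cs (emb \<zeta> (tmul c c')) (embm \<zeta> (Ns ! j))"
    unfolding h embm_scale[OF phi] cs_cs emb_mul[OF phi] ..
  finally have e: "A ** embm \<zeta> g = cs (emb \<zeta> (tmul c c')) (embm \<zeta> (Ns ! j))" .
  have "tmul c c' \<in> set SC" using chk_SC c h(3) by blast
  moreover have "Ns ! j \<in> set Ns" using h(2) by simp
  ultimately show ?thesis unfolding TT_def e by blast
qed

lemma Gq_TT: "M \<in> Gq \<Longrightarrow> eval_mat \<zeta> M \<in> TT"
proof (induction rule: Gq.induct)
  case one
  have "eval_mat \<zeta> (mat 1) = cs (emb \<zeta> (1,0,0,0)) (embm \<zeta> Idt)" by (simp add: eval_one cs_one)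
  moreover have "Idt \<in> set Ns" "(1,0,0,0) \<in> set SC" by (simp_all add: Idt_def Ns_def SC_def)
  ultimately show ?case unfolding TT_def by blast
next
  case (mulR M)
  have "eval_mat \<zeta> (M ** Rq) = eval_mat \<zeta> M ** embm \<zeta> Rt"
    using eval_mult_gen[OF Gq_lpm[OF mulR.hyps] phi5_ne0[OF phi] Rq_simple] eval_R[OF phi] by simp
  then show ?case using TT_mul[OF chk_R mulR.IH] by simp
next
  case (mulS M)
  have "eval_mat \<zeta> (M ** Sq) = eval_mat \<zeta> M ** embm \<zeta> St"
    using eval_mult_gen[OF Gq_lpm[OF mulS.hyps] phi5_ne0[OF phi] Sq_simple] eval_S[OF phi] by simp
  then show ?case using TT_mul[OF chk_S mulS.IH] by simp
next
  case (mulRi M)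
  have "eval_mat \<zeta> (M ** Rq_inv) = eval_mat \<zeta> M ** embm \<zeta> Rit"
    using eval_mult_gen[OF Gq_lpm[OF mulRi.hyps] phi5_ne0[OF phi] Rqi_simple] eval_Ri[OF phi] by simp
  then show ?case using TT_mul[OF chk_Ri mulRi.IH] by simp
next
  case (mulSi M)
  have "eval_mat \<zeta> (M ** Sq_inv) = eval_mat \<zeta> M ** embm \<zeta> Sit"
    using eval_mult_gen[OF Gq_lpm[OF mulSi.hyps] phi5_ne0[OF phi] Sqi_simple] eval_Si[OF phi] by simp
  then show ?case using TT_mul[OF chk_Si mulSi.IH] by simp
qed

end

lemma cs_diag: "A ** embm z (u,(0,0,0,0),(0,0,0,0),u) = cs (emb z u) A"
  by (simp add: cs_def vec_eq_iff matrix_matrix_mult_def sum_2 forall_2 del: emb.simps)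
     (simp add: mult.commute)

context prim5 begin

abbreviation "s \<equiv> (of_real sr :: complex)"

definition U :: "complex set" where "U = {c. \<exists>j::nat. c = \<zeta>^j \<or> c = - (\<zeta>^j)}"

lemma z4: "\<zeta>^4 = -(\<zeta>^3 + \<zeta>^2 + \<zeta> + 1)"
proof -
  have h: "\<zeta>^4 + (\<zeta>^3 + \<zeta>^2 + \<zeta> + 1) = 0" using phi by (simp add: phi5_def add.assoc)
  then show ?thesis using eq_neg_iff_add_eq_0 by blast
qed

lemma s_alt: "s = -1 - \<zeta>^2 - \<zeta>^3"
  unfolding s_eq[symmetric] z4 by simp

lemma embv:
  "emb \<zeta> (0,0,0,0) = 0" "emb \<zeta> (1,0,0,0) = 1" "emb \<zeta> (0,1,0,0) = \<zeta>" "emb \<zeta> (0,0,1,0) = \<zeta>^2"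
  "emb \<zeta> (0,0,0,1) = \<zeta>^3" "emb \<zeta> (-1,-1,-1,-1) = \<zeta>^4"
  "emb \<zeta> (-1,0,0,0) = -1" "emb \<zeta> (0,-1,0,0) = -\<zeta>" "emb \<zeta> (0,0,-1,0) = -(\<zeta>^2)"
  "emb \<zeta> (0,0,0,-1) = -(\<zeta>^3)" "emb \<zeta> (1,1,1,1) = -(\<zeta>^4)"
  "emb \<zeta> (-1,0,-1,-1) = s" "emb \<zeta> (0,0,-1,-1) = s + 1" "emb \<zeta> (2,0,0,0) = 2"
  by (simp_all add: z4 s_alt algebra_simps)

lemma U_pow: "\<zeta>^j \<in> U" "- (\<zeta>^j) \<in> U" "1 \<in> U" "\<zeta> \<in> U" "-1 \<in> U" "-\<zeta> \<in> U"
  unfolding U_def by (auto intro: exI[of _ 0] exI[of _ 1] exI[of _ j])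

lemma SC_U: "c \<in> set SC \<Longrightarrow> emb \<zeta> c \<in> U"
  unfolding SC_def by (auto simp del: emb.simps simp add: embv U_pow)

lemma TG_val: "t \<in> set TG \<Longrightarrow> emb \<zeta> t \<in> {0, s, 1, s + 1, 2}"
  unfolding TG_def by (auto simp del: emb.simps simp add: embv)

lemma z_ne0: "\<zeta> \<noteq> 0" using phi5_ne0[OF phi] .

lemma U_mult: "a \<in> U \<Longrightarrow> b \<in> U \<Longrightarrow> a * b \<in> U"
  unfolding U_def by (auto simp: power_add[symmetric] intro: exI[of _ "_ + _"])

lemma zinv: "inverse (\<zeta>^j) = \<zeta>^(4*j)"
proof (rule inverse_unique)
  have "\<zeta>^j * \<zeta>^(4*j) = (\<zeta>^5)^j" by (simp add: power_add[symmetric] power_mult[symmetric])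
  then show "\<zeta>^j * \<zeta>^(4*j) = 1" using z5 by simp
qed

lemma U_inv: "a \<in> U \<Longrightarrow> inverse a \<in> U"
  unfolding U_def by (auto simp: zinv)

lemma U_ne0: "a \<in> U \<Longrightarrow> a \<noteq> 0"
  unfolding U_def using z_ne0 by auto

lemma U_mod: "U = {c. \<exists>j::nat. (c = \<zeta>^j \<or> c = - (\<zeta>^j)) \<and> j < 5}"
proof -
  have "\<zeta>^j = \<zeta>^(j mod 5)" for j
  proof -
    have "\<zeta>^j = \<zeta>^(5 * (j div 5) + j mod 5)" by simp
    also have "\<dots> = (\<zeta>^5)^(j div 5) * \<zeta>^(j mod 5)" by (simp only: power_add power_mult)
    finally show ?thesis using z5 by simp
  qed
  note m = this
  show ?thesis
  proof (rule set_eqI, rule iffI)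
    fix c assume "c \<in> U"
    then obtain j where "c = \<zeta>^j \<or> c = - (\<zeta>^j)" by (auto simp: U_def)
    then have "(c = \<zeta>^(j mod 5) \<or> c = - (\<zeta>^(j mod 5))) \<and> j mod 5 < 5" using m[of j] by auto
    then show "c \<in> {c. \<exists>j::nat. (c = \<zeta>^j \<or> c = - (\<zeta>^j)) \<and> j < 5}" by blast
  qed (auto simp: U_def)
qed

definition Gz :: "(complex^2^2) set" where "Gz = Gq_at \<zeta>"

lemma evR: "M \<in> Gq \<Longrightarrow> eval_mat \<zeta> (M ** Rq) = eval_mat \<zeta> M ** embm \<zeta> Rt"
  using eval_mult_gen[OF Gq_lpm phi5_ne0[OF phi] Rq_simple] eval_R[OF phi] by simp
lemma evS: "M \<in> Gq \<Longrightarrow> eval_mat \<zeta> (M ** Sq) = eval_mat \<zeta> M ** embm \<zeta> St"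
  using eval_mult_gen[OF Gq_lpm phi5_ne0[OF phi] Sq_simple] eval_S[OF phi] by simp

lemma G_w: "A \<in> Gz \<Longrightarrow> cs (-(\<zeta>^4)) A \<in> Gz"
proof -
  assume "A \<in> Gz"
  then obtain M where M: "M \<in> Gq" "A = eval_mat \<zeta> M" by (auto simp: Gz_def Gq_at_def)
  have M2: "M ** Sq ** Sq \<in> Gq" using M by (intro Gq.mulS)
  have "eval_mat \<zeta> (M ** Sq ** Sq) = A ** embm \<zeta> St ** embm \<zeta> St"
    using evS[OF Gq.mulS[OF M(1)]] evS[OF M(1)] M(2) by simp
  also have "\<dots> = A ** embm \<zeta> (tmm St St)" by (simp add: embm_mm[OF phi] matrix_mul_assoc)
  also have "tmm St St = ((1,1,1,1),(0,0,0,0),(0,0,0,0),(1,1,1,1))" by (simp add: St_def)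
  also have "A ** embm \<zeta> ((1,1,1,1),(0,0,0,0),(0,0,0,0),(1,1,1,1)) = cs (-(\<zeta>^4)) A"
    by (simp only: cs_diag embv)
  finally show ?thesis using M2 by (auto simp: Gz_def Gq_at_def intro: image_eqI[OF _ M2])
qed

lemma G_wpow: "A \<in> Gz \<Longrightarrow> cs ((-(\<zeta>^4))^k) A \<in> Gz"
proof (induction k)
  case 0 then show ?case by (simp add: cs_one)
next
  case (Suc k)
  then have "cs (-(\<zeta>^4)) (cs ((-(\<zeta>^4))^k) A) \<in> Gz" by (intro G_w)
  then show ?case by (simp add: cs_cs)
qed

lemma G_U: "A \<in> Gz \<Longrightarrow> c \<in> U \<Longrightarrow> cs c A \<in> Gz"
proof -
  assume A: "A \<in> Gz" and c: "c \<in> U"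
  have w4: "(-(\<zeta>^4))^4 = \<zeta>"
  proof -
    have "(-(\<zeta>^4))^4 = \<zeta>^(5*3+1)" by (simp add: power_mult[symmetric])
    also have "\<dots> = (\<zeta>^5)^3 * \<zeta>" by (simp only: power_add power_mult power_one_right)
    then show ?thesis using z5 by simp
  qed
  have w5: "(-(\<zeta>^4))^5 = -1"
  proof -
    have "(-(\<zeta>^4))^5 = - ((\<zeta>^5)^4)" by (simp add: power_mult[symmetric])
    then show ?thesis using z5 by simp
  qed
  obtain j where "c = \<zeta>^j \<or> c = - (\<zeta>^j)" using c by (auto simp: U_def)
  then show ?thesis
  proof
    assume cj: "c = \<zeta>^j"
    have e: "c = (-(\<zeta>^4))^(4*j)" unfolding cj power_mult w4 ..
    show ?thesis unfolding e by (rule G_wpow[OF A])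
  next
    assume cj: "c = - (\<zeta>^j)"
    have e: "c = (-(\<zeta>^4))^(4*j + 5)" unfolding cj power_add power_mult w4 w5 by simp
    show ?thesis unfolding e by (rule G_wpow[OF A])
  qed
qed

lemma achieve:
  assumes M: "M \<in> Gq" and ev: "eval_mat \<zeta> M = embm \<zeta> W" and tr: "ttr W = tmul c0 y"
    and c0: "emb \<zeta> c0 \<in> U" and c: "c \<in> U"
  shows "emb \<zeta> y * c \<in> trace ` Gz"
proof -
  let ?m = "c * inverse (emb \<zeta> c0)"
  have m: "?m \<in> U" using c c0 U_mult U_inv by blast
  have "embm \<zeta> W \<in> eval_mat \<zeta> ` Gq" using M ev by (metis image_eqI)
  then have A: "embm \<zeta> W \<in> Gz" by (simp add: Gz_def Gq_at_def)
  have "cs ?m (embm \<zeta> W) \<in> Gz" by (rule G_U[OF A m])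
  moreover have "trace (cs ?m (embm \<zeta> W)) = emb \<zeta> y * c"
    unfolding cs_trace embm_trace tr emb_mul[OF phi] using U_ne0[OF c0] by simp
  ultimately show ?thesis by (metis image_eqI)
qed

end

fun tsum :: "zt \<Rightarrow> int" where "tsum (a,b,c,d) = a + b + c + d"

lemma chk2: "\<forall>c\<in>set SC. \<forall>t\<in>set TG. (tmul c t = (0,0,0,0) \<longleftrightarrow> t = (0,0,0,0)) \<and> ((5::int) dvd tsum (tmul c t) \<longleftrightarrow> t = (0,0,0,0))"
  by (simp add: SC_def TG_def)

context prim5 begin

definition TSs :: "complex set" where
  "TSs = {x. \<exists>c\<in>U. x \<in> {0, s*c, c, (s+1)*c, 2*c}}"

lemma trace_sub: "trace ` Gz \<subseteq> TSs"
proof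
  fix x assume "x \<in> trace ` Gz"
  then obtain M where M: "M \<in> Gq" "x = trace (eval_mat \<zeta> M)" by (auto simp: Gz_def Gq_at_def)
  obtain c N where e: "eval_mat \<zeta> M = cs (emb \<zeta> c) (embm \<zeta> N)" and c: "c \<in> set SC" and N: "N \<in> set Ns"
    using Gq_TT[OF M(1)] by (auto simp: TT_def)
  have x: "x = emb \<zeta> (ttr N) * emb \<zeta> c" using M(2) unfolding e cs_trace embm_trace by simp
  have "emb \<zeta> (ttr N) \<in> {0, s, 1, s + 1, 2}" using chk_TG N TG_val by blast
  then show "x \<in> TSs" using SC_U[OF c] unfolding TSs_def x by auto
qed

lemma ev_one: "eval_mat \<zeta> (mat 1) = embm \<zeta> Idt" by (rule eval_one)

lemma trace_sup: "TSs \<subseteq> trace ` Gz"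
proof
  fix x assume "x \<in> TSs"
  then obtain c where c: "c \<in> U" and x: "x \<in> {0, s*c, c, (s+1)*c, 2*c}" by (auto simp: TSs_def)
  have G1: "mat 1 \<in> Gq" by (rule Gq.one)
  have GR: "mat 1 ** Rq \<in> Gq" by (rule Gq.mulR[OF G1])
  have GS: "mat 1 ** Sq \<in> Gq" by (rule Gq.mulS[OF G1])
  have GRR: "mat 1 ** Rq ** Rq \<in> Gq" by (rule Gq.mulR[OF GR])
  have GRS: "mat 1 ** Rq ** Sq \<in> Gq" by (rule Gq.mulS[OF GR])
  have eR: "eval_mat \<zeta> (mat 1 ** Rq) = embm \<zeta> (tmm Idt Rt)"
    using evR[OF G1] by (simp add: ev_one embm_mm[OF phi])
  have eS: "eval_mat \<zeta> (mat 1 ** Sq) = embm \<zeta> (tmm Idt St)"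
    using evS[OF G1] by (simp add: ev_one embm_mm[OF phi])
  have eRR: "eval_mat \<zeta> (mat 1 ** Rq ** Rq) = embm \<zeta> (tmm (tmm Idt Rt) Rt)"
    by (simp only: evR[OF GR] eR embm_mm[OF phi])
  have eRS: "eval_mat \<zeta> (mat 1 ** Rq ** Sq) = embm \<zeta> (tmm (tmm Idt Rt) St)"
    by (simp only: evS[OF GR] eR embm_mm[OF phi])
  have a0: "emb \<zeta> (0,0,0,0) * c \<in> trace ` Gz"
    by (rule achieve[OF GS eS _ _ c, of "(1,0,0,0)"]) (simp_all add: Idt_def St_def embv U_pow del: emb.simps)
  have a1: "emb \<zeta> (-1,0,-1,-1) * c \<in> trace ` Gz"
    by (rule achieve[OF GRR eRR _ _ c, of "(0,1,0,0)"]) (simp_all add: Idt_def Rt_def embv U_pow del: emb.simps)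
  have a2: "emb \<zeta> (1,0,0,0) * c \<in> trace ` Gz"
    by (rule achieve[OF GRS eRS _ _ c, of "(1,0,0,0)"]) (simp_all add: Idt_def Rt_def St_def embv U_pow del: emb.simps)
  have a3: "emb \<zeta> (0,0,-1,-1) * c \<in> trace ` Gz"
    by (rule achieve[OF GR eR _ _ c, of "(0,0,0,-1)"]) (simp_all add: Idt_def Rt_def embv U_pow del: emb.simps)
  have a4: "emb \<zeta> (2,0,0,0) * c \<in> trace ` Gz"
    by (rule achieve[OF G1 ev_one _ _ c, of "(1,0,0,0)"]) (simp_all add: Idt_def embv U_pow del: emb.simps)
  have "x = 0 \<or> x = s*c \<or> x = c \<or> x = (s+1)*c \<or> x = 2*c" using x by simp
  then show "x \<in> trace ` Gz"
  proof (elim disjE)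
    assume "x = 0" then show ?thesis using a0 by (simp add: embv del: emb.simps)
  next
    assume "x = s*c" then show ?thesis using a1 by (simp only: embv)
  next
    assume "x = c" then show ?thesis using a2 by (simp add: embv del: emb.simps)
  next
    assume "x = (s+1)*c" then show ?thesis using a3 by (simp only: embv)
  next
    assume "x = 2*c" then show ?thesis using a4 by (simp only: embv)
  qed
qed

lemma part1: "trace ` Gq_at \<zeta> = TSs"
  using trace_sub trace_sup by (auto simp: Gz_def)

lemma U_neg: "c \<in> U \<Longrightarrow> - c \<in> U" unfolding U_def by auto

lemma TSs_stmt:
  "TSs = {x. \<exists>c j. (c = \<zeta> ^ j \<or> c = - (\<zeta> ^ j)) \<and> j < (5::nat) \<and>
                 x \<in> {0, (of_real (sqrt 5) - 1) / 2 * c, c, (of_real (sqrt 5) + 1) / 2 * c, 2 * c}}"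
proof -
  have r: "(2 * sr + 1)^2 = 5" using s_quad by (simp add: power2_eq_square algebra_simps)
  have sq: "sqrt 5 = \<bar>2 * sr + 1\<bar>" using real_sqrt_abs[of "2 * sr + 1"] r by simp
  have R: "{x. \<exists>c j. (c = \<zeta> ^ j \<or> c = - (\<zeta> ^ j)) \<and> j < (5::nat) \<and>
                 x \<in> {0, (of_real (sqrt 5) - 1) / 2 * c, c, (of_real (sqrt 5) + 1) / 2 * c, 2 * c}}
     = {x. \<exists>c\<in>U. x \<in> {0, (of_real (sqrt 5) - 1) / 2 * c, c, (of_real (sqrt 5) + 1) / 2 * c, 2 * c}}"
    unfolding U_mod by blast
  show ?thesis unfolding R
  proof (cases "2 * sr + 1 \<ge> 0")
    case True
    then have h: "of_real (sqrt 5) = 2 * s + 1" using sq by simp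
    have e1: "(of_real (sqrt 5) - 1) / 2 = s" and e2: "(of_real (sqrt 5) + 1) / 2 = s + 1" unfolding h by simp_all
    show "TSs = {x. \<exists>c\<in>U. x \<in> {0, (of_real (sqrt 5) - 1) / 2 * c, c, (of_real (sqrt 5) + 1) / 2 * c, 2 * c}}"
      unfolding e1 e2 TSs_def ..
  next
    case False
    then have h: "of_real (sqrt 5) = - (2 * s + 1)" using sq by simp
    have e1: "(of_real (sqrt 5) - 1) / 2 = - (s + 1)" and e2: "(of_real (sqrt 5) + 1) / 2 = - s"
      unfolding h by (simp_all add: field_simps)
    show "TSs = {x. \<exists>c\<in>U. x \<in> {0, (of_real (sqrt 5) - 1) / 2 * c, c, (of_real (sqrt 5) + 1) / 2 * c, 2 * c}}"
      unfolding e1 e2 TSs_def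
    proof (rule set_eqI, rule iffI)
      fix x assume "x \<in> {x. \<exists>c\<in>U. x \<in> {0, s * c, c, (s + 1) * c, 2 * c}}"
      then obtain c where c: "c \<in> U" and x: "x \<in> {0, s * c, c, (s + 1) * c, 2 * c}" by blast
      have "x = 0 \<or> x = s*c \<or> x = c \<or> x = (s+1)*c \<or> x = 2*c" using x by simp
      then show "x \<in> {x. \<exists>c\<in>U. x \<in> {0, - (s + 1) * c, c, - s * c, 2 * c}}"
      proof (elim disjE)
        assume "x = s*c" then have "x = - s * (-c)" by simp
        then show ?thesis using U_neg[OF c] by blast
      next
        assume "x = (s+1)*c" then have "x = - (s + 1) * (-c)" by (simp add: algebra_simps)
        then show ?thesis using U_neg[OF c] by blast
      qed (use c in blast)+
    next
      fix x assume "x \<in> {x. \<exists>c\<in>U. x \<in> {0, - (s + 1) * c, c, - s * c, 2 * c}}"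
      then obtain c where c: "c \<in> U" and x: "x \<in> {0, - (s + 1) * c, c, - s * c, 2 * c}" by blast
      have "x = 0 \<or> x = - (s + 1) * c \<or> x = c \<or> x = - s * c \<or> x = 2*c" using x by simp
      then show "x \<in> {x. \<exists>c\<in>U. x \<in> {0, s * c, c, (s + 1) * c, 2 * c}}"
      proof (elim disjE)
        assume "x = - s * c" then have "x = s * (-c)" by simp
        then show ?thesis using U_neg[OF c] by blast
      next
        assume "x = - (s + 1) * c" then have "x = (s + 1) * (-c)" by (simp add: algebra_simps)
        then show ?thesis using U_neg[OF c] by blast
      qed (use c in blast)+
    qed
  qed
qed

lemma part2:
  assumes M: "M \<in> Gq"
  shows "((\<exists>m::int. laurent_eval 1 (trace M) = of_int (5 * m)) \<longleftrightarrow> laurent_eval \<zeta> (trace M) = 0) \<and>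
         (laurent_eval \<zeta> (trace M) = 0 \<longleftrightarrow> laurent_dvd qint5 (trace M))"
proof -
  let ?f = "trace M"
  have lf: "laurent_poly ?f" and ev: "laurent_eval \<zeta> ?f = trace (eval_mat \<zeta> M)"
    using trace_eval[OF Gq_lpm[OF M]] by auto
  obtain c N where e: "eval_mat \<zeta> M = cs (emb \<zeta> c) (embm \<zeta> N)" and c: "c \<in> set SC" and N: "N \<in> set Ns"
    using Gq_TT[OF M] by (auto simp: TT_def)
  define t where "t = ttr N"
  have t: "t \<in> set TG" using chk_TG N by (simp add: t_def)
  define u where "u = tmul c t"
  have evu: "laurent_eval \<zeta> ?f = emb \<zeta> u"
    unfolding ev e cs_trace embm_trace u_def t_def emb_mul[OF phi] ..
  define b where "b r = bsum ?f r" for r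
  have ub: "u = (b 0 - b 4, b 1 - b 4, b 2 - b 4, b 3 - b 4)"
    using emb_inj[of u] eval_resid(1)[OF lf] evu unfolding b_def by simp
  have one: "laurent_eval 1 ?f = of_int (b 0 + b 1 + b 2 + b 3 + b 4)"
    using eval_resid(2)[OF lf] unfolding b_def .
  have ck: "(u = (0,0,0,0) \<longleftrightarrow> t = (0,0,0,0)) \<and> ((5::int) dvd tsum u \<longleftrightarrow> t = (0,0,0,0))"
    using chk2 c t unfolding u_def by blast
  have z: "laurent_eval \<zeta> ?f = 0 \<longleftrightarrow> u = (0,0,0,0)"
  proof
    assume "laurent_eval \<zeta> ?f = 0"
    then have "emb \<zeta> u = emb \<zeta> (0,0,0,0)" using evu by simp
    then show "u = (0,0,0,0)" by (rule emb_inj)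
  next
    assume "u = (0,0,0,0)" then show "laurent_eval \<zeta> ?f = 0" using evu by simp
  qed
  have A: "(\<exists>m::int. laurent_eval 1 ?f = of_int (5 * m)) \<longleftrightarrow> (5::int) dvd tsum u"
  proof -
    have "(\<exists>m::int. laurent_eval 1 ?f = of_int (5 * m)) \<longleftrightarrow> (\<exists>m::int. b 0 + b 1 + b 2 + b 3 + b 4 = 5 * m)"
      unfolding one by (simp only: of_int_eq_iff)
    also have "\<dots> \<longleftrightarrow> (5::int) dvd (b 0 + b 1 + b 2 + b 3 + b 4)" by (auto simp: dvd_def)
    also have "b 0 + b 1 + b 2 + b 3 + b 4 = tsum u + 5 * b 4" unfolding ub by simp
    also have "(5::int) dvd (tsum u + 5 * b 4) \<longleftrightarrow> 5 dvd tsum u" by (simp add: dvd_add_left_iff)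
    finally show ?thesis .
  qed
  have C: "laurent_eval \<zeta> ?f = 0 \<longleftrightarrow> laurent_dvd qint5 ?f"
  proof
    assume "laurent_eval \<zeta> ?f = 0"
    then have "u = (0,0,0,0)" using z by simp
    then have "\<forall>r\<in>{0,1,2,3}. bsum ?f r = bsum ?f 4" using ub unfolding b_def by simp
    then show "laurent_dvd qint5 ?f" by (rule dvd_construct[OF lf])
  next
    assume "laurent_dvd qint5 ?f" then show "laurent_eval \<zeta> ?f = 0" by (rule dvd_eval[OF _ phi])
  qed
  show ?thesis using A z ck C by blast
qed

end

theorem corollary3p7:
  fixes \<zeta> :: complex
  assumes prim: "\<zeta> ^ 5 = 1" "\<forall>k::nat. 0 < k \<and> k < 5 \<longrightarrow> \<zeta> ^ k \<noteq> 1"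
  shows "(trace ` Gq_at \<zeta> =
           {x. \<exists>c j. (c = \<zeta> ^ j \<or> c = - (\<zeta> ^ j)) \<and> j < (5::nat) \<and>
                 x \<in> {0, (of_real (sqrt 5) - 1) / 2 * c, c, (of_real (sqrt 5) + 1) / 2 * c, 2 * c}}) \<and>
         (\<forall>M \<in> Gq. let f = trace M in
           ((\<exists>m::int. laurent_eval 1 f = of_int (5 * m)) \<longleftrightarrow> laurent_eval \<zeta> f = 0) \<and>
           (laurent_eval \<zeta> f = 0 \<longleftrightarrow> laurent_dvd qint5 f))"
proof -
  have "\<zeta> \<noteq> 1" using prim(2)[rule_format, of 1] by simp
  then interpret P: prim5 \<zeta> using prim(1) by unfold_locales
  show ?thesis using P.part1 P.TSs_stmt P.part2 by (simp add: Let_def)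
qed

end
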